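(* Let $n\ge1$, $P\in[1/n,1]$, and let $H_\alpha$ be the Rényi entropy of order $\alpha\in(0,1)\cup(1,\infty)$, or the Shannon entropy for $\alpha=1$. Under the constraints $\vec\lambda\in\mathbb{R}^n$, $\vec\lambda\ge0$, $\sum_k\lambda_k=1$, $\sum_k\lambda_k^2=P$, the minimum and maximum of $H_\alpha(\vec\lambda)$ are attained by vectors with at most two distinct non-null entries, i.e. (up to permutation) $\vec\lambda=(a_\pm,\dots,a_\pm,b_\pm,\dots,b_\pm,0,\dots,0)$ with $a_\pm$ repeated $n_a$ times and $b_\pm$ repeated $n_b$ times ($n_a+n_b\le n$), where $$a_\pm:=\frac{1\pm\sqrt{\frac{n_b}{n_a}(P(n_a+n_b)-1)}}{n_a+n_b},\qquad b_\pm:=\frac{1\mp\sqrt{\frac{n_a}{n_b}(P(n_a+n_b)-1)}}{n_a+n_b}$$ are the only two assignments of the two values satisfying the constraints. Explicitly, $$\min H_\alpha(\vec\lambda)=\min_{n_a,n_b,\pm}\frac{1}{1-\alpha}\ln\big(n_aa_\pm^\alpha+n_bb_\pm^\alpha\big),\qquad \max H_\alpha(\vec\lambda)=\max_{n_a,n_b,\pm}\frac{1}{1-\alpha}\ln\big(n_aa_\pm^\alpha+n_bb_\pm^\alpha\big),$$ where the optimizations on the right range over positive integers $n_a,n_b$ with $n_a+n_b\le n$ and the sign choices for which $a_\pm,b_\pm$ are real and nonnegative (for $\alpha=1$ the expression is replaced by its limit $-n_aa_\pm\ln a_\pm-n_bb_\pm\ln b_\pm$).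
   Context: For a probability vector $\vec\lambda$, the Rényi entropy of order $\alpha$ is $H_\alpha(\vec\lambda):=(1-\alpha)^{-1}\ln\sum_k\lambda_k^\alpha$, and $H_1(\vec\lambda):=\lim_{\alpha\to1}H_\alpha(\vec\lambda)=-\sum_k\lambda_k\ln\lambda_k$ (with $0\ln0:=0$). *)

theory Defs
  imports Complex_Main
begin

text \<open>Renyi entropy of order alpha of the probability vector (lam 0, ..., lam (n-1));
  for alpha = 1 it is the Shannon entropy (with 0 ln 0 = 0, automatic since 0 * _ = 0).
  Note 0 powr alpha = 0, matching 0^alpha = 0 for alpha > 0.\<close>
definition renyi :: "real \<Rightarrow> nat \<Rightarrow> (nat \<Rightarrow> real) \<Rightarrow> real" where
  "renyi \<alpha> n lam =
     (if \<alpha> = 1 then - (\<Sum>k<n. lam k * ln (lam k))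
      else ln (\<Sum>k<n. lam k powr \<alpha>) / (1 - \<alpha>))"

definition feasible :: "nat \<Rightarrow> real \<Rightarrow> (nat \<Rightarrow> real) \<Rightarrow> bool" where
  "feasible n P lam \<longleftrightarrow>
     (\<forall>k<n. 0 \<le> lam k) \<and> (\<Sum>k<n. lam k) = 1 \<and> (\<Sum>k<n. (lam k)\<^sup>2) = P"

text \<open>The two values a_s, b_s for sign s (s = 1 gives a_+, b_+; s = -1 gives a_-, b_-).\<close>
definition aval :: "real \<Rightarrow> nat \<Rightarrow> nat \<Rightarrow> real \<Rightarrow> real" where
  "aval P na nb s = (1 + s * sqrt (real nb / real na * (P * real (na + nb) - 1))) / real (na + nb)"

definition bval :: "real \<Rightarrow> nat \<Rightarrow> nat \<Rightarrow> real \<Rightarrow> real" where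
  "bval P na nb s = (1 - s * sqrt (real na / real nb * (P * real (na + nb) - 1))) / real (na + nb)"

definition cands :: "nat \<Rightarrow> real \<Rightarrow> (nat \<times> nat \<times> real) set" where
  "cands n P = {(na, nb, s). 0 < na \<and> 0 < nb \<and> na + nb \<le> n \<and> s \<in> {1, -1} \<and>
      1 \<le> P * real (na + nb) \<and> 0 \<le> aval P na nb s \<and> 0 \<le> bval P na nb s}"

definition hval :: "real \<Rightarrow> real \<Rightarrow> nat \<times> nat \<times> real \<Rightarrow> real" where
  "hval \<alpha> P c = (case c of (na, nb, s) \<Rightarrow>
     (let a = aval P na nb s; b = bval P na nb s in
      if \<alpha> = 1 then - real na * a * ln a - real nb * b * ln b
      else ln (real na * a powr \<alpha> + real nb * b powr \<alpha>) / (1 - \<alpha>)))"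

definition two_valued :: "nat \<Rightarrow> (nat \<Rightarrow> real) \<Rightarrow> bool" where
  "two_valued n lam \<longleftrightarrow> card ((lam ` {..<n}) - {0}) \<le> 2"

end

theory Submission
  imports Defs "HOL-Analysis.Analysis"
begin


lemma alg1: fixes A B N x P :: real assumes "A>0" "B>0" "N = A + B" "A*(1/N+x)^2 + B*(1/N - A*x/B)^2 = P"
  shows "(A*N*x)^2 = A*B*(P*N-1)"
proof -
  have ne: "N \<noteq> 0" "B \<noteq> 0" using assms by auto
  have AN: "A = N - B" using assms by simp
  have "B * (B * (N * (N * N))) + B * (N * (N * (N * (N * (N * (N * (x * x))))))) =
      B * (B * (N * (N * (N * (N * P))))) + B * (B * (N * (N * (N * (N * (N * (x * x)))))))"
    using assms(4) ne unfolding AN by (simp add: field_simps power2_eq_square)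
  then have "(B*N^3) * (B*N*P + B*N^2*x^2 - B - N^3*x^2) = 0" by (simp add: algebra_simps power2_eq_square power3_eq_cube)
  then have "B*N*P + B*N^2*x^2 - B - N^3*x^2 = 0" using ne by simp
  moreover have "(A*N*x)^2 - A*B*(P*N-1) = (N-B)*(N^3*x^2 + B - B*N*P - B*N^2*x^2)"
    unfolding AN by (simp add: algebra_simps power2_eq_square power3_eq_cube)
  ultimately show ?thesis by (simp add: algebra_simps)
qed

lemma aval_alt:
  assumes "0 < na" "0 < nb"
  shows "aval P na nb s = (1 + s * sqrt (real na * real nb * (P * real (na + nb) - 1)) / real na) / real (na + nb)"
    and "bval P na nb s = (1 - s * sqrt (real na * real nb * (P * real (na + nb) - 1)) / real nb) / real (na + nb)"
proof -
  have "sqrt (real nb / real na * (P * real (na + nb) - 1)) = sqrt (real na * real nb * (P * real (na + nb) - 1)) / real na"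
  proof -
    have "real nb / real na * (P * real (na + nb) - 1) = (real na * real nb * (P * real (na + nb) - 1)) / (real na)^2"
      using assms by (simp add: field_simps power2_eq_square)
    then show ?thesis using assms by (simp add: real_sqrt_divide)
  qed
  then show "aval P na nb s = (1 + s * sqrt (real na * real nb * (P * real (na + nb) - 1)) / real na) / real (na + nb)"
    by (simp add: aval_def)
  have "sqrt (real na / real nb * (P * real (na + nb) - 1)) = sqrt (real na * real nb * (P * real (na + nb) - 1)) / real nb"
  proof -
    have "real na / real nb * (P * real (na + nb) - 1) = (real na * real nb * (P * real (na + nb) - 1)) / (real nb)^2"
      using assms by (simp add: field_simps power2_eq_square)
    then show ?thesis using assms by (simp add: real_sqrt_divide)
  qed
  then show "bval P na nb s = (1 - s * sqrt (real na * real nb * (P * real (na + nb) - 1)) / real nb) / real (na + nb)"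
    by (simp add: bval_def)
qed

lemma part1:
  assumes "0 < na" "0 < nb" "1 \<le> P * real (na + nb)"
  shows "real na * a + real nb * b = 1 \<and> real na * a\<^sup>2 + real nb * b\<^sup>2 = P \<longleftrightarrow>
         (\<exists>s\<in>{1, -1::real}. a = aval P na nb s \<and> b = bval P na nb s)"
proof -
  define N where "N = real (na + nb)"
  define r where "r = sqrt (real na * real nb * (P * N - 1))"
  have N: "N = real na + real nb" "N > 0" using assms by (auto simp: N_def)
  have r0: "r \<ge> 0" using assms by (auto simp: r_def N_def)
  have r2: "r^2 = real na * real nb * (P * N - 1)" using assms by (simp add: r_def N_def)
  have av: "\<And>s. aval P na nb s = (1 + s * r / real na) / N" "\<And>s. bval P na nb s = (1 - s * r / real nb) / N"
    using aval_alt[OF assms(1,2)] by (simp_all add: r_def N_def)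
  have nz: "N \<noteq> 0" "real na \<noteq> 0" "real nb \<noteq> 0" using N assms by auto
  show ?thesis
  proof
    assume h: "real na * a + real nb * b = 1 \<and> real na * a\<^sup>2 + real nb * b\<^sup>2 = P"
    define x where "x = a - 1/N"
    have nbb: "real nb * b = 1 - real na * a" using h by simp
    have b: "b = 1/N - real na * x / real nb"
    proof -
      have nN: "N \<noteq> 0" "real nb \<noteq> 0" using N assms by auto
      have "1/N - real na * x / real nb = (real nb + real na - real na * a * N) / (N * real nb)"
        using nN unfolding x_def by (simp add: field_simps)
      also have "\<dots> = (N * (1 - real na * a)) / (N * real nb)" using N(1) by (simp add: algebra_simps)
      also have "\<dots> = (1 - real na * a) / real nb" using nN by simp
      also have "\<dots> = b" using nbb assms by (simp add: field_simps)
      finally show ?thesis by simp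
    qed
    have "real na * (1/N + x)^2 + real nb * (1/N - real na * x / real nb)^2 = P"
      using h b by (simp add: x_def)
    then have "(real na * N * x)^2 = r^2"
      unfolding r2 using alg1[of "real na" "real nb" N x P] N assms by simp
    then have "real na * N * x = r \<or> real na * N * x = - r"
      using power2_eq_iff by blast
    then obtain s where s: "s \<in> {1, -1::real}" "real na * N * x = s * r" by force
    have xe: "x = s * r / (real na * N)" using s(2) nz by (simp add: field_simps)
    have "a = 1/N + x" by (simp add: x_def)
    also have "\<dots> = 1/N + s * r / (real na * N)" using xe by simp
    also have "\<dots> = (1 + s * r / real na) / N" using nz by (simp add: field_simps)
    finally have "a = (1 + s * r / real na) / N" .
    moreover have "b = (1 - s * r / real nb) / N" using xe nz b by (simp add: field_simps)
    ultimately show "\<exists>s\<in>{1, -1::real}. a = aval P na nb s \<and> b = bval P na nb s"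
      using s(1) by (intro bexI[of _ s]) (simp_all add: av)
  next
    assume "\<exists>s\<in>{1, -1::real}. a = aval P na nb s \<and> b = bval P na nb s"
    then obtain s where s: "s \<in> {1, -1::real}" "a = (1 + s * r / real na) / N" "b = (1 - s * r / real nb) / N"
      using av by blast
    have s2: "s^2 = 1" using s by auto
    have "real na * a + real nb * b = (real na + real nb) / N" using s(2,3) nz by (simp add: field_simps)
    then have "real na * a + real nb * b = 1" using N by simp
    moreover have "real na * a\<^sup>2 + real nb * b\<^sup>2 = P"
    proof -
      have "real na * a\<^sup>2 + real nb * b\<^sup>2 = (real na + real nb + s^2 * r^2 * (1/real na + 1/real nb)) / N^2"
        unfolding s(2,3) using nz by (simp add: field_simps power2_eq_square)
      also have "\<dots> = P"
      proof -
        have NB: "real nb = N - real na" using N by simp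
        have "N - real na \<noteq> 0" using nz NB by simp
        then show ?thesis using nz unfolding s2 r2 NB by (simp add: field_simps power2_eq_square)
      qed
      finally show ?thesis .
    qed
    ultimately show "real na * a + real nb * b = 1 \<and> real na * a\<^sup>2 + real nb * b\<^sup>2 = P" ..
  qed
qed



definition vec2 :: "nat \<Rightarrow> nat \<Rightarrow> real \<Rightarrow> real \<Rightarrow> nat \<Rightarrow> real" where
  "vec2 na nb a b k = (if k < na then a else if k < na + nb then b else 0)"

lemma sum_vec2:
  assumes "na + nb \<le> n" "h 0 = 0"
  shows "(\<Sum>k<n. h (vec2 na nb a b k)) = real na * h a + real nb * h b"
proof -
  let ?f = "\<lambda>k. h (vec2 na nb a b k)"
  have "(\<Sum>k<n. ?f k) = sum ?f {0..<na} + sum ?f {na..<na+nb} + sum ?f {na+nb..<n}"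
    using assms by (simp add: atLeast0LessThan[symmetric] sum.atLeastLessThan_concat)
  also have "sum ?f {0..<na} = real na * h a"
    by (simp add: vec2_def)
  also have "sum ?f {na..<na+nb} = sum (\<lambda>_. h b) {na..<na+nb}"
    by (rule sum.cong) (auto simp: vec2_def)
  also have "sum ?f {na+nb..<n} = 0"
    using assms by (intro sum.neutral) (auto simp: vec2_def)
  finally show ?thesis by simp
qed

lemma grouping:
  fixes n :: nat and lam :: "nat \<Rightarrow> real"
  assumes "\<forall>k<n. lam k = a \<or> lam k = b \<or> lam k = 0" "a \<noteq> b" "h 0 = 0"
  shows "(\<Sum>k<n. h (lam k)) = real (card {k. k < n \<and> lam k = a}) * h a + real (card {k. k < n \<and> lam k = b}) * h b"
proof -
  have cnt: "(\<Sum>k<n. if lam k = c then h c else 0) = real (card {k. k < n \<and> lam k = c}) * h c" for c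
  proof -
    have "(\<Sum>k<n. if lam k = c then h c else 0) = sum (\<lambda>_. h c) {k\<in>{..<n}. lam k = c}"
      using sum.inter_filter[OF finite_lessThan[of n], of "\<lambda>_. h c" "\<lambda>k. lam k = c"] by simp
    also have "{k\<in>{..<n}. lam k = c} = {k. k < n \<and> lam k = c}" by auto
    finally show ?thesis by simp
  qed
  have "(\<Sum>k<n. h (lam k)) = (\<Sum>k<n. (if lam k = a then h a else 0) + (if lam k = b then h b else 0))"
    using assms by (intro sum.cong) auto
  also have "\<dots> = (\<Sum>k<n. if lam k = a then h a else 0) + (\<Sum>k<n. if lam k = b then h b else 0)"
    by (simp add: sum.distrib)
  finally show ?thesis by (simp add: cnt)
qed

lemma two_valued_vec2: "two_valued n (vec2 na nb a b)"
proof -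
  have "(vec2 na nb a b ` {..<n}) - {0} \<subseteq> {a, b}" by (auto simp: vec2_def)
  then have "card ((vec2 na nb a b ` {..<n}) - {0}) \<le> card {a, b}" by (intro card_mono) auto
  also have "card {a,b} \<le> 2" by (simp add: card_insert_le_m1)
  finally show ?thesis by (simp add: two_valued_def)
qed

lemma cand_vec:
  assumes "(na, nb, s) \<in> cands n P"
  shows "feasible n P (vec2 na nb (aval P na nb s) (bval P na nb s))"
    and "renyi \<alpha> n (vec2 na nb (aval P na nb s) (bval P na nb s)) = hval \<alpha> P (na, nb, s)"
proof -
  let ?a = "aval P na nb s" and ?b = "bval P na nb s"
  have c: "0 < na" "0 < nb" "na + nb \<le> n" "s \<in> {1, -1}" "1 \<le> P * real (na + nb)" "0 \<le> ?a" "0 \<le> ?b"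
    using assms by (auto simp: cands_def)
  have eq: "real na * ?a + real nb * ?b = 1 \<and> real na * ?a\<^sup>2 + real nb * ?b\<^sup>2 = P"
    using part1[OF c(1,2,5)] c(4) by blast
  show "feasible n P (vec2 na nb ?a ?b)"
    unfolding feasible_def
    using c eq sum_vec2[OF c(3), of "\<lambda>x. x"] sum_vec2[OF c(3), of "\<lambda>x. x^2"]
    by (auto simp: vec2_def)
  show "renyi \<alpha> n (vec2 na nb ?a ?b) = hval \<alpha> P (na, nb, s)"
    using sum_vec2[OF c(3), of "\<lambda>x. x * ln x"] sum_vec2[OF c(3), of "\<lambda>x. x powr \<alpha>"]
    by (simp add: renyi_def hval_def Let_def algebra_simps)
qed



lemma renyi_cong:
  assumes "(\<Sum>k<n. lam k * ln (lam k)) = (\<Sum>k<n. mu k * ln (mu k))"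
    "(\<Sum>k<n. lam k powr \<alpha>) = (\<Sum>k<n. mu k powr \<alpha>)"
  shows "renyi \<alpha> n lam = renyi \<alpha> n mu"
  using assms by (simp add: renyi_def)

lemma cs2:
  fixes A B a b :: real assumes "A \<ge> 0" "B \<ge> 0"
  shows "(A*a + B*b)^2 \<le> (A + B) * (A*a^2 + B*b^2)"
proof -
  have "(A + B) * (A*a^2 + B*b^2) - (A*a + B*b)^2 = A*B*(a-b)^2"
    by (simp add: algebra_simps power2_eq_square)
  moreover have "A*B*(a-b)^2 \<ge> 0" using assms by simp
  ultimately show ?thesis by linarith
qed

lemma tv_struct:
  assumes "feasible n P lam" "two_valued n lam" "2 \<le> n"
  shows "\<exists>na nb a b. 0 < na \<and> 0 < nb \<and> na + nb \<le> n \<and> 0 \<le> a \<and> 0 \<le> b \<and>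
     (\<forall>h. h 0 = 0 \<longrightarrow> (\<Sum>k<n. h (lam k)) = real na * h a + real nb * h b)"
proof -
  define V where "V = lam ` {..<n} - {0}"
  have fin: "finite V" by (simp add: V_def)
  have cV: "card V \<le> 2" using assms(2) by (simp add: two_valued_def V_def)
  have nonneg: "\<forall>k<n. 0 \<le> lam k" and s1: "(\<Sum>k<n. lam k) = 1"
    using assms(1) by (auto simp: feasible_def)
  have Vne: "V \<noteq> {}"
  proof
    assume "V = {}"
    then have "\<forall>k<n. lam k = 0" by (auto simp: V_def)
    then have "(\<Sum>k<n. lam k) = 0" by simp
    with s1 show False by simp
  qed
  have Vpos: "\<And>v. v \<in> V \<Longrightarrow> 0 < v" using nonneg by (force simp: V_def)
  have inV: "\<And>k. k < n \<Longrightarrow> lam k \<noteq> 0 \<Longrightarrow> lam k \<in> V" by (auto simp: V_def)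
  obtain a where a: "a \<in> V" using Vne by blast
  show ?thesis
  proof (cases "V = {a}")
    case True
    define b where "b = a + 1"
    have ab: "a \<noteq> b" "b \<notin> V" using True by (auto simp: b_def)
    have allk: "\<forall>k<n. lam k = a \<or> lam k = b \<or> lam k = 0" using inV True by blast
    have apos: "0 < a" using Vpos a by blast
    have b0: "b \<noteq> 0" using apos by (simp add: b_def)
    have cb: "{k. k < n \<and> lam k = b} = {}"
    proof -
      { fix k assume k: "k < n" "lam k = b"
        then have "lam k \<in> V" using inV[OF k(1)] k(2) b0 by simp
        with ab(2) k(2) have False by simp }
      then show ?thesis by blast
    qed
    define m where "m = card {k. k < n \<and> lam k = a}"
    have G: "\<And>h. h 0 = 0 \<Longrightarrow> (\<Sum>k<n. h (lam k)) = real m * h a"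
      using grouping[OF allk ab(1)] cb by (simp add: m_def)
    have "real m * a = 1" using G[of "\<lambda>x. x"] s1 by simp
    then have m0: "m \<noteq> 0" by (metis mult_zero_left of_nat_0 zero_neq_one)
    show ?thesis
    proof (cases "m = 1")
      case True
      then have "a = 1" using \<open>real m * a = 1\<close> by simp
      have G2: "\<And>h. h 0 = 0 \<Longrightarrow> (\<Sum>k<n. h (lam k)) = real 1 * h a + real 1 * h 0"
        using G True by simp
      show ?thesis using assms(3) apos G2 by (intro exI[of _ 1] exI[of _ 1] exI[of _ a] exI[of _ 0]) auto
    next
      case False
      have mn: "m \<le> n" unfolding m_def by (rule order.trans[OF card_mono[of "{..<n}"]]) auto
      have G2: "\<And>h. h 0 = 0 \<Longrightarrow> (\<Sum>k<n. h (lam k)) = real 1 * h a + real (m - 1) * h a"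
      proof -
        fix h :: "real \<Rightarrow> real" assume "h 0 = 0"
        then have "(\<Sum>k<n. h (lam k)) = real m * h a" by (rule G)
        also have "real m = real 1 + real (m - 1)" using m0 by simp
        finally show "(\<Sum>k<n. h (lam k)) = real 1 * h a + real (m - 1) * h a" by (simp add: algebra_simps)
      qed
      have "0 < m - 1" "1 + (m - 1) \<le> n" using False m0 mn by auto
      then show ?thesis using apos G2 by (intro exI[of _ 1] exI[of _ "m - 1"] exI[of _ a] exI[of _ a]) auto
    qed
  next
    case False
    then obtain b where b: "b \<in> V" "b \<noteq> a" using a by blast
    have Vab: "V = {a, b}"
    proof -
      have sub: "{a, b} \<subseteq> V" using a b by auto
      have c2: "card {a, b} = 2" using b by simp
      have "card {a,b} \<le> card V" using fin sub by (intro card_mono)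
      then have "card {a,b} = card V" using cV c2 by simp
      then show ?thesis using card_subset_eq[OF fin sub] by simp
    qed
    have allk: "\<forall>k<n. lam k = a \<or> lam k = b \<or> lam k = 0" using inV Vab by blast
    define A where "A = {k. k < n \<and> lam k = a}"
    define B where "B = {k. k < n \<and> lam k = b}"
    have G: "\<And>h. h 0 = 0 \<Longrightarrow> (\<Sum>k<n. h (lam k)) = real (card A) * h a + real (card B) * h b"
      using grouping[OF allk b(2)[symmetric]] by (simp add: A_def B_def)
    have "A \<noteq> {}" using a by (auto simp: A_def V_def)
    then have cA: "0 < card A" by (simp add: A_def card_gt_0_iff)
    have "B \<noteq> {}" using b by (auto simp: B_def V_def)
    then have cB: "0 < card B" by (simp add: B_def card_gt_0_iff)
    have "card A + card B = card (A \<union> B)"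
      using b(2) by (intro card_Un_disjoint[symmetric]) (auto simp: A_def B_def)
    also have "\<dots> \<le> card {..<n}" by (intro card_mono) (auto simp: A_def B_def)
    finally have "card A + card B \<le> n" by simp
    moreover have "0 \<le> a" "0 \<le> b" using Vpos[OF a] Vpos[OF b(1)] by auto
    ultimately show ?thesis
      using cA cB G
      apply -
      apply (rule exI[of _ "card A"], rule exI[of _ "card B"], rule exI[of _ a], rule exI[of _ b])
      by auto
  qed
qed

lemma tv_cand:
  assumes "feasible n P lam" "two_valued n lam" "2 \<le> n"
  shows "\<exists>c\<in>cands n P. renyi \<alpha> n lam = hval \<alpha> P c"
proof -
  obtain na nb a b where st: "0 < na" "0 < nb" "na + nb \<le> n" "0 \<le> a" "0 \<le> b"
    and G: "\<And>h. h 0 = 0 \<Longrightarrow> (\<Sum>k<n. h (lam k)) = real na * h a + real nb * h b"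
    using tv_struct[OF assms] by blast
  have e1: "real na * a + real nb * b = 1" using G[of "\<lambda>x. x"] assms(1) by (simp add: feasible_def)
  have e2: "real na * a^2 + real nb * b^2 = P" using G[of "\<lambda>x. x^2"] assms(1) by (simp add: feasible_def)
  have "1 \<le> P * real (na + nb)"
    using cs2[of "real na" "real nb" a b] e1 e2 by (simp add: algebra_simps)
  then obtain s where s: "s \<in> {1, -1::real}" "a = aval P na nb s" "b = bval P na nb s"
    using part1[OF st(1,2)] e1 e2 by blast
  have c: "(na, nb, s) \<in> cands n P"
    using st s \<open>1 \<le> P * real (na + nb)\<close> by (auto simp: cands_def)
  have "renyi \<alpha> n lam = renyi \<alpha> n (vec2 na nb a b)"
  proof (rule renyi_cong)
    show "(\<Sum>k<n. lam k * ln (lam k)) = (\<Sum>k<n. vec2 na nb a b k * ln (vec2 na nb a b k))"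
      using G[of "\<lambda>x. x * ln x"] sum_vec2[OF st(3), of "\<lambda>x. x * ln x"] by simp
    show "(\<Sum>k<n. lam k powr \<alpha>) = (\<Sum>k<n. vec2 na nb a b k powr \<alpha>)"
      using G[of "\<lambda>x. x powr \<alpha>"] sum_vec2[OF st(3), of "\<lambda>x. x powr \<alpha>"] by simp
  qed
  also have "\<dots> = hval \<alpha> P (na, nb, s)" using cand_vec(2)[OF c] s by simp
  finally show ?thesis using c by blast
qed



definition ncol :: "(real \<Rightarrow> real) \<Rightarrow> real \<Rightarrow> real \<Rightarrow> real \<Rightarrow> real" where
  "ncol f x y z = f x * (y - z) + f y * (z - x) + f z * (x - y)"

lemma ncol_sorted:
  assumes "0 < x" "x < y" "y < z"
    and d: "\<And>t. 0 < t \<Longrightarrow> (f has_real_derivative f' t) (at t)"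
    and inj: "\<And>u v. 0 < u \<Longrightarrow> 0 < v \<Longrightarrow> f' u = f' v \<Longrightarrow> u = v"
  shows "ncol f x y z \<noteq> 0"
proof -
  obtain p where p: "x < p" "p < y" "f y - f x = (y - x) * f' p"
    using MVT2[OF assms(2), of f f'] d assms by force
  obtain q where q: "y < q" "q < z" "f z - f y = (z - y) * f' q"
    using MVT2[OF assms(3), of f f'] d assms by force
  have "p < q" using p q by simp
  moreover have "0 < p" "0 < q" using p q assms by auto
  ultimately have "f' p \<noteq> f' q" using inj[of p q] by fastforce
  moreover have "ncol f x y z = (y - x) * (z - y) * (f' p - f' q)"
  proof -
    have fy: "f y = f x + (y - x) * f' p" using p by simp
    have fz: "f z = f x + (y - x) * f' p + (z - y) * f' q" using p q by simp
    show ?thesis unfolding ncol_def fz fy by (simp add: algebra_simps)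
  qed
  ultimately show ?thesis using assms by simp
qed

lemma ncol_swap1: "ncol f y x z = - ncol f x y z" by (simp add: ncol_def algebra_simps)
lemma ncol_swap2: "ncol f x z y = - ncol f x y z" by (simp add: ncol_def algebra_simps)
lemma ncol_swap3: "ncol f z y x = - ncol f x y z" by (simp add: ncol_def algebra_simps)

lemma ncol_nz:
  assumes "0 < x" "0 < y" "0 < z" "x \<noteq> y" "y \<noteq> z" "x \<noteq> z"
    and d: "\<And>t. 0 < t \<Longrightarrow> (f has_real_derivative f' t) (at t)"
    and inj: "\<And>u v. 0 < u \<Longrightarrow> 0 < v \<Longrightarrow> f' u = f' v \<Longrightarrow> u = v"
  shows "ncol f x y z \<noteq> 0"
proof -
  have S: "\<And>a b c. 0 < a \<Longrightarrow> a < b \<Longrightarrow> b < c \<Longrightarrow> ncol f a b c \<noteq> 0"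
    using ncol_sorted d inj by blast
  consider "x < y" "y < z" | "x < z" "z < y" | "y < x" "x < z" | "y < z" "z < x" | "z < x" "x < y" | "z < y" "y < x"
    using assms by linarith
  then show ?thesis
  proof cases
    case 1 then show ?thesis using S assms by blast
  next
    case 2 then show ?thesis using S[of x z y] assms ncol_swap2[of f x y z] by auto
  next
    case 3 then show ?thesis using S[of y x z] assms ncol_swap1[of f x y z] by auto
  next
    case 4 then show ?thesis using S[of y z x] assms ncol_swap1[of f y z x] ncol_swap3[of f x y z] ncol_swap2[of f y x z] ncol_swap1[of f x y z] by (auto simp: ncol_def algebra_simps)
  next
    case 5 then show ?thesis using S[of z x y] assms by (auto simp: ncol_def algebra_simps)
  next
    case 6 then show ?thesis using S[of z y x] assms ncol_swap3[of f x y z] by auto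
  qed
qed

lemma sides:
  fixes \<phi> :: "real \<Rightarrow> real" and L :: real
  assumes "(\<phi> has_real_derivative L) (at 0)" "L \<noteq> 0" "eventually Q (at 0)"
  shows "\<exists>t. Q t \<and> \<phi> t < \<phi> 0" "\<exists>t. Q t \<and> \<phi> 0 < \<phi> t"
proof -
  have "((\<lambda>h. (\<phi> (0 + h) - \<phi> 0) / h * L) \<longlongrightarrow> L * L) (at 0)"
    using assms(1) unfolding DERIV_def by (intro tendsto_mult tendsto_const)
  moreover have "0 < L * L" using assms(2) by (metis mult_neg_neg mult_pos_pos linorder_neq_iff)
  ultimately have ev: "eventually (\<lambda>h. 0 < (\<phi> h - \<phi> 0) / h * L) (at 0)"
    using order_tendstoD(1) by fastforce
  have evR: "eventually (\<lambda>h. Q h \<and> 0 < h \<and> 0 < (\<phi> h - \<phi> 0) / h * L) (at_right 0)"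
  proof -
    have r1: "eventually (\<lambda>h. 0 < (\<phi> h - \<phi> 0) / h * L) (at_right 0)" using ev eventually_at_split by blast
    have r2: "eventually Q (at_right 0)" using assms(3) eventually_at_split by blast
    have r3: "eventually (\<lambda>h. 0 < h) (at_right (0::real))" by (simp add: eventually_at_right_less)
    show ?thesis using eventually_conj[OF r2 eventually_conj[OF r3 r1]] by simp
  qed
  have evL: "eventually (\<lambda>h. Q h \<and> h < 0 \<and> 0 < (\<phi> h - \<phi> 0) / h * L) (at_left 0)"
  proof -
    have r1: "eventually (\<lambda>h. 0 < (\<phi> h - \<phi> 0) / h * L) (at_left 0)" using ev eventually_at_split by blast
    have r2: "eventually Q (at_left 0)" using assms(3) eventually_at_split by blast
    have r3: "eventually (\<lambda>h. h < 0) (at_left (0::real))" by (auto simp: eventually_at_left_field intro: exI[of _ "-1"])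
    show ?thesis using eventually_conj[OF r2 eventually_conj[OF r3 r1]] by simp
  qed
  obtain a where a: "Q a" "0 < a" "0 < (\<phi> a - \<phi> 0) / a * L"
    using eventually_happens'[OF _ evR] by auto
  obtain b where b: "Q b" "b < 0" "0 < (\<phi> b - \<phi> 0) / b * L"
    using eventually_happens'[OF _ evL] by auto
  have ra: "0 < (\<phi> a - \<phi> 0) * L" using a by (simp add: zero_less_mult_iff zero_less_divide_iff)
  have rb: "(\<phi> b - \<phi> 0) * L < 0" using b by (auto simp: zero_less_mult_iff zero_less_divide_iff mult_less_0_iff)
  show "\<exists>t. Q t \<and> \<phi> t < \<phi> 0"
  proof (cases "L > 0")
    case True then show ?thesis using rb b by (intro exI[of _ b]) (auto simp: mult_less_0_iff)
  next
    case False then show ?thesis using ra a by (intro exI[of _ a]) (auto simp: zero_less_mult_iff)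
  qed
  show "\<exists>t. Q t \<and> \<phi> 0 < \<phi> t"
  proof (cases "L > 0")
    case True then show ?thesis using ra a by (intro exI[of _ a]) (auto simp: zero_less_mult_iff)
  next
    case False then show ?thesis using rb b assms(2) by (intro exI[of _ b]) (auto simp: mult_less_0_iff)
  qed
qed



lemma sum_upd:
  fixes h :: "real \<Rightarrow> real" and f :: "nat \<Rightarrow> real"
  assumes "i < n"
  shows "(\<Sum>l<n. h ((f(i:=c)) l)) = (\<Sum>l<n. h (f l)) - h (f i) + h c"
proof -
  have "(\<Sum>l<n. h ((f(i:=c)) l)) = h c + (\<Sum>l\<in>{..<n}-{i}. h ((f(i:=c)) l))"
    using assms by (subst sum.remove[of _ i]) auto
  also have "(\<Sum>l\<in>{..<n}-{i}. h ((f(i:=c)) l)) = (\<Sum>l\<in>{..<n}-{i}. h (f l))"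
    by (intro sum.cong) auto
  also have "(\<Sum>l\<in>{..<n}-{i}. h (f l)) = (\<Sum>l<n. h (f l)) - h (f i)"
    using assms by (subst sum.remove[of "{..<n}" i]) auto
  finally show ?thesis by simp
qed

lemma sgn_inv: "a \<noteq> 0 \<Longrightarrow> sgn (a::real) * inverse \<bar>a\<bar> = inverse a"
  by (cases "a > 0") (auto simp: sgn_if)

lemma perturb:
  fixes lam :: "nat \<Rightarrow> real" and g g' :: "real \<Rightarrow> real"
  assumes feas: "feasible n P lam" and idx: "i < n" "j < n" "k < n" "i \<noteq> j" "i \<noteq> k" "j \<noteq> k"
    and pos: "0 < lam i" "0 < lam j" "0 < lam k" and dist: "lam i \<noteq> lam j"
    and dg: "\<And>t. 0 < t \<Longrightarrow> (g has_real_derivative g' t) (at t)"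
    and nc: "ncol g' (lam i) (lam j) (lam k) \<noteq> 0"
  shows "\<exists>mu. feasible n P mu \<and> (\<Sum>l<n. g (mu l)) < (\<Sum>l<n. g (lam l))"
    and "\<exists>mu. feasible n P mu \<and> (\<Sum>l<n. g (lam l)) < (\<Sum>l<n. g (mu l))"
proof -
  define x where "x = lam i"
  define y where "y = lam j"
  define z where "z = lam k"
  have xyz: "0 < x" "0 < y" "0 < z" "x \<noteq> y" using pos dist by (auto simp: x_def y_def z_def)
  define \<sigma> where "\<sigma> = sgn (x - y)"
  define D where "D = (\<lambda>t::real. 2 * (x^2 + y^2 + z^2 - (z + t)^2) - (x + y - t)^2)"
  define u where "u = (\<lambda>t. (x + y - t + \<sigma> * sqrt (D t)) / 2)"
  define v where "v = (\<lambda>t. (x + y - t - \<sigma> * sqrt (D t)) / 2)"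
  define mu where "mu = (\<lambda>t. lam(i := u t, j := v t, k := z + t))"
  define \<phi> where "\<phi> = (\<lambda>t. g (u t) + g (v t) + g (z + t))"
  have D0: "D 0 = (x - y)^2" by (simp add: D_def power2_eq_square algebra_simps)
  have sD0: "sqrt (D 0) = \<bar>x - y\<bar>" by (simp add: D0)
  have s2: "\<sigma> * \<sigma> = 1" using xyz by (simp add: \<sigma>_def sgn_if)
  have sab: "\<sigma> * \<bar>x - y\<bar> = x - y" by (simp add: \<sigma>_def sgn_mult_abs)
  have u0: "u 0 = x" using sab by (simp add: u_def sD0)
  have v0: "v 0 = y" using sab by (simp add: v_def sD0)
  have D0pos: "0 < D 0" using xyz by (simp add: D0)
  have sumf: "(\<Sum>l<n. h (mu t l)) = (\<Sum>l<n. h (lam l)) - h x - h y - h z + h (u t) + h (v t) + h (z + t)"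
    for h :: "real \<Rightarrow> real" and t
  proof -
    have "(\<Sum>l<n. h (mu t l)) = (\<Sum>l<n. h ((lam(i := u t, j := v t)) l)) - h ((lam(i := u t, j := v t)) k) + h (z + t)"
      unfolding mu_def by (rule sum_upd[OF idx(3)])
    also have "(\<Sum>l<n. h ((lam(i := u t, j := v t)) l)) = (\<Sum>l<n. h ((lam(i := u t)) l)) - h ((lam(i := u t)) j) + h (v t)"
      by (rule sum_upd[OF idx(2)])
    also have "(\<Sum>l<n. h ((lam(i := u t)) l)) = (\<Sum>l<n. h (lam l)) - h (lam i) + h (u t)"
      by (rule sum_upd[OF idx(1)])
    finally show ?thesis using idx by (simp add: x_def y_def z_def)
  qed
  have feas_mu: "feasible n P (mu t)" if t: "0 \<le> D t" "0 \<le> u t" "0 \<le> v t" "0 \<le> z + t" for t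
  proof -
    have nn: "\<forall>l<n. 0 \<le> lam l" and s1: "(\<Sum>l<n. lam l) = 1" and s2': "(\<Sum>l<n. (lam l)^2) = P"
      using feas by (auto simp: feasible_def)
    have "\<forall>l<n. 0 \<le> mu t l" using nn t by (auto simp: mu_def)
    moreover have "(\<Sum>l<n. mu t l) = 1"
      using sumf[of "\<lambda>a. a" t] s1 by (simp add: u_def v_def field_simps)
    moreover have "(\<Sum>l<n. (mu t l)^2) = P"
    proof -
      have sq: "(sqrt (D t))^2 = D t" using t by simp
      have "(u t)^2 + (v t)^2 = ((x + y - t)^2 + (\<sigma> * \<sigma>) * (sqrt (D t))^2) / 2"
        by (simp add: u_def v_def power2_eq_square field_simps)
      also have "\<dots> = x^2 + y^2 + z^2 - (z + t)^2" unfolding s2 sq by (simp add: D_def)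
      finally have "(u t)^2 + (v t)^2 = x^2 + y^2 + z^2 - (z + t)^2" .
      then show ?thesis using sumf[of "\<lambda>a. a^2" t] s2' by simp
    qed
    ultimately show ?thesis by (simp add: feasible_def)
  qed
  have dD: "(D has_real_derivative (2 * (x + y) - 4 * z)) (at 0)"
    unfolding D_def by (auto intro!: derivative_eq_intros simp: algebra_simps)
  have dS: "((\<lambda>t. sqrt (D t)) has_real_derivative (inverse (sqrt (D 0)) / 2) * (2 * (x + y) - 4 * z)) (at 0)"
    by (rule DERIV_chain2[OF DERIV_real_sqrt[OF D0pos] dD])
  define sd where "sd = (inverse (sqrt (D 0)) / 2) * (2 * (x + y) - 4 * z)"
  have ssd: "\<sigma> * sd = (x + y - 2 * z) / (x - y)"
  proof -
    have "\<sigma> * sd = (\<sigma> * inverse \<bar>x - y\<bar>) * (x + y - 2 * z)" by (simp add: sd_def sD0 algebra_simps)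
    also have "\<sigma> * inverse \<bar>x - y\<bar> = inverse (x - y)" using xyz unfolding \<sigma>_def by (intro sgn_inv) simp
    finally show ?thesis by (simp add: divide_inverse)
  qed
  have du0: "(u has_real_derivative (0 - 1 + \<sigma> * sd) / 2) (at 0)"
    unfolding u_def sd_def
    by (intro DERIV_cdivide DERIV_add DERIV_diff DERIV_const DERIV_ident DERIV_cmult dS)
  have du: "(u has_real_derivative (y - z) / (x - y)) (at 0)"
  proof (rule DERIV_cong[OF du0])
    show "(0 - 1 + \<sigma> * sd) / 2 = (y - z) / (x - y)" unfolding ssd using xyz by (simp add: field_simps)
  qed
  have dv0: "(v has_real_derivative (0 - 1 - \<sigma> * sd) / 2) (at 0)"
    unfolding v_def sd_def
    by (intro DERIV_cdivide DERIV_add DERIV_diff DERIV_const DERIV_ident DERIV_cmult dS)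
  have dv: "(v has_real_derivative (z - x) / (x - y)) (at 0)"
  proof (rule DERIV_cong[OF dv0])
    show "(0 - 1 - \<sigma> * sd) / 2 = (z - x) / (x - y)" unfolding ssd using xyz by (simp add: field_simps)
  qed
  have dw: "((\<lambda>t. z + t) has_real_derivative 1) (at 0)"
    by (auto intro!: derivative_eq_intros)
  have gu: "((\<lambda>t. g (u t)) has_real_derivative g' x * ((y - z) / (x - y))) (at 0)"
  proof -
    have "(g has_real_derivative g' x) (at (u 0))" using dg[OF xyz(1)] u0 by simp
    from DERIV_chain2[OF this du] show ?thesis .
  qed
  have gv: "((\<lambda>t. g (v t)) has_real_derivative g' y * ((z - x) / (x - y))) (at 0)"
  proof -
    have "(g has_real_derivative g' y) (at (v 0))" using dg[OF xyz(2)] v0 by simp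
    from DERIV_chain2[OF this dv] show ?thesis .
  qed
  have gw: "((\<lambda>t. g (z + t)) has_real_derivative g' z * 1) (at 0)"
  proof -
    have "(g has_real_derivative g' z) (at ((\<lambda>t. z + t) 0))" using dg[OF xyz(3)] by simp
    from DERIV_chain2[OF this dw] show ?thesis .
  qed
  have dphi0: "(\<phi> has_real_derivative g' x * ((y - z) / (x - y)) + g' y * ((z - x) / (x - y)) + g' z * 1) (at 0)"
    unfolding \<phi>_def by (intro DERIV_add gu gv gw)
  define L where "L = ncol g' x y z / (x - y)"
  have dphi: "(\<phi> has_real_derivative L) (at 0)"
  proof (rule DERIV_cong[OF dphi0])
    show "g' x * ((y - z) / (x - y)) + g' y * ((z - x) / (x - y)) + g' z * 1 = L"
      unfolding L_def ncol_def add_divide_distrib using xyz by simp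
  qed
  have L0: "L \<noteq> 0" using nc xyz by (simp add: L_def x_def y_def z_def)
  have evpos: "eventually (\<lambda>t. 0 < f t) (at 0)" if "isCont f 0" "0 < f 0" for f :: "real \<Rightarrow> real"
    using that unfolding isCont_def by (rule order_tendstoD(1))
  have ev: "eventually (\<lambda>t. 0 \<le> D t \<and> 0 \<le> u t \<and> 0 \<le> v t \<and> 0 \<le> z + t) (at 0)"
  proof -
    have e1: "eventually (\<lambda>t. 0 < D t) (at 0)" using evpos[OF DERIV_isCont[OF dD] D0pos] .
    have e2: "eventually (\<lambda>t. 0 < u t) (at 0)" using evpos[OF DERIV_isCont[OF du]] u0 xyz by simp
    have e3: "eventually (\<lambda>t. 0 < v t) (at 0)" using evpos[OF DERIV_isCont[OF dv]] v0 xyz by simp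
    have e4: "eventually (\<lambda>t. 0 < z + t) (at 0)" using evpos[OF DERIV_isCont[OF dw]] xyz by simp
    show ?thesis
      using eventually_conj[OF e1 eventually_conj[OF e2 eventually_conj[OF e3 e4]]]
      by (rule eventually_mono) auto
  qed
  have phi0: "\<phi> 0 = g x + g y + g z" by (simp add: \<phi>_def u0 v0)
  have gsum: "(\<Sum>l<n. g (mu t l)) = (\<Sum>l<n. g (lam l)) + (\<phi> t - \<phi> 0)" for t
    using sumf[of g t] phi0 by (simp add: \<phi>_def)
  show "\<exists>mu. feasible n P mu \<and> (\<Sum>l<n. g (mu l)) < (\<Sum>l<n. g (lam l))"
  proof -
    obtain t where "0 \<le> D t \<and> 0 \<le> u t \<and> 0 \<le> v t \<and> 0 \<le> z + t" "\<phi> t < \<phi> 0"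
      using sides(1)[OF dphi L0 ev] by blast
    then show ?thesis using feas_mu[of t] gsum[of t] by (intro exI[of _ "mu t"]) auto
  qed
  show "\<exists>mu. feasible n P mu \<and> (\<Sum>l<n. g (lam l)) < (\<Sum>l<n. g (mu l))"
  proof -
    obtain t where "0 \<le> D t \<and> 0 \<le> u t \<and> 0 \<le> v t \<and> 0 \<le> z + t" "\<phi> 0 < \<phi> t"
      using sides(2)[OF dphi L0 ev] by blast
    then show ?thesis using feas_mu[of t] gsum[of t] by (intro exI[of _ "mu t"]) auto
  qed
qed



lemma cont_xlnx: "continuous_on {0..} (\<lambda>x::real. x * ln x)"
proof -
  have "continuous (at x within {0..}) (\<lambda>x::real. x * ln x)" if "x \<in> {0..}" for x
  proof (cases "x = 0")
    case True
    have lim: "((\<lambda>x::real. - (ln (inverse x) / inverse x)) \<longlongrightarrow> - 0) (at_right 0)"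
      by (intro tendsto_minus filterlim_compose[OF ln_x_over_x_tendsto_0 filterlim_inverse_at_top_right])
    have "((\<lambda>x::real. x * ln x) \<longlongrightarrow> 0) (at_right 0)"
    proof (rule Lim_transform_eventually[OF lim[simplified]])
      show "\<forall>\<^sub>F x in at_right 0. - (ln (inverse x) / inverse x) = x * ln (x::real)"
        using eventually_at_right_less[of "0::real"]
        by (rule eventually_mono) (simp add: ln_inverse divide_inverse)
    qed
    then show ?thesis using True by (simp add: continuous_within at_within_Ici_at_right)
  next
    case False
    then have "x > 0" using that by simp
    then have "isCont (\<lambda>x::real. x * ln x) x" by (auto intro!: continuous_intros)
    then show ?thesis by (rule continuous_at_imp_continuous_at_within)
  qed
  then show ?thesis by (simp add: continuous_on_eq_continuous_within)
qed

lemma cont_powr: "0 < \<alpha> \<Longrightarrow> continuous_on {0..} (\<lambda>x::real. x powr \<alpha>)"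
  by (intro continuous_on_powr' continuous_on_id continuous_on_const) auto

lemma Spos:
  assumes "feasible n P lam"
  shows "0 < (\<Sum>k<n. lam k powr \<alpha>)"
proof -
  have nn: "\<forall>k<n. 0 \<le> lam k" and s1: "(\<Sum>k<n. lam k) = 1" using assms by (auto simp: feasible_def)
  obtain k where k: "k < n" "lam k \<noteq> 0"
  proof (rule ccontr)
    assume "\<not> thesis"
    then have "\<forall>k<n. lam k = 0" using that by blast
    then have "(\<Sum>k<n. lam k) = 0" by simp
    with s1 show False by simp
  qed
  have "0 < lam k powr \<alpha>" using k nn by simp
  also have "lam k powr \<alpha> \<le> (\<Sum>k<n. lam k powr \<alpha>)"
    using k by (intro member_le_sum) (auto simp: powr_ge_zero)
  finally show ?thesis .
qed

definition trunc :: "nat \<Rightarrow> (nat \<Rightarrow> real) \<Rightarrow> nat \<Rightarrow> real" where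
  "trunc n f k = (if k < n then f k else 0)"

lemma trunc_sum: "(\<Sum>k<n. h (trunc n f k)) = (\<Sum>k<n. h (f k))"
  by (intro sum.cong) (auto simp: trunc_def)

lemma trunc_feasible: "feasible n P (trunc n f) \<longleftrightarrow> feasible n P f"
  using trunc_sum[of "\<lambda>x. x" n f] trunc_sum[of "\<lambda>x. x^2" n f]
  by (auto simp: feasible_def trunc_def)

lemma trunc_renyi: "renyi \<alpha> n (trunc n f) = renyi \<alpha> n f"
  using trunc_sum[of "\<lambda>x. x * ln x" n f] trunc_sum[of "\<lambda>x. x powr \<alpha>" n f]
  by (simp add: renyi_def)

definition KS :: "nat \<Rightarrow> real \<Rightarrow> (nat \<Rightarrow> real) set" where
  "KS n P = {f. (\<forall>k. f k \<in> (if k < n then {0..1} else {0})) \<and> (\<Sum>k<n. f k) = 1 \<and> (\<Sum>k<n. (f k)^2) = P}"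

lemma compact_KS: "compact (KS n P)"
proof -
  define S where "S = (\<lambda>k::nat. if k < n then {0..1::real} else {0})"
  have "compactin (product_topology (\<lambda>i. euclidean) UNIV) (PiE UNIV S)"
    unfolding compactin_PiE by (auto simp: S_def)
  then have c1: "compact (PiE UNIV S)" by (simp add: euclidean_product_topology)
  have cs: "continuous_on UNIV (\<lambda>f::nat\<Rightarrow>real. \<Sum>k<n. f k)"
    by (intro continuous_on_sum) simp
  have cs2: "continuous_on UNIV (\<lambda>f::nat\<Rightarrow>real. \<Sum>k<n. (f k)^2)"
    by (intro continuous_on_sum continuous_on_power) simp
  have "closed {f::nat\<Rightarrow>real. (\<Sum>k<n. f k) = 1}" by (intro closed_Collect_eq cs continuous_on_const)
  moreover have "closed {f::nat\<Rightarrow>real. (\<Sum>k<n. (f k)^2) = P}" by (intro closed_Collect_eq cs2 continuous_on_const)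
  ultimately have "compact (PiE UNIV S \<inter> {f. (\<Sum>k<n. f k) = 1} \<inter> {f. (\<Sum>k<n. (f k)^2) = P})"
    using c1 by (intro compact_Int_closed) auto
  also have "PiE UNIV S \<inter> {f. (\<Sum>k<n. f k) = 1} \<inter> {f. (\<Sum>k<n. (f k)^2) = P} = KS n P"
    by (simp add: KS_def S_def PiE_def extensional_def Pi_iff set_eq_iff conj_ac)
  finally show ?thesis .
qed

lemma KS_feasible:
  assumes "f \<in> KS n P" shows "feasible n P f"
proof -
  have "\<forall>k. f k \<in> (if k < n then {0..1} else {0})" using assms by (simp add: KS_def)
  then have "\<forall>k<n. 0 \<le> f k" by (metis atLeastAtMost_iff)
  then show ?thesis using assms by (simp add: KS_def feasible_def)
qed

lemma trunc_KS:
  assumes "feasible n P f" shows "trunc n f \<in> KS n P"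
proof -
  have nn: "\<forall>k<n. 0 \<le> f k" and s1: "(\<Sum>k<n. f k) = 1" using assms by (auto simp: feasible_def)
  have le1: "f k \<le> 1" if "k < n" for k
  proof -
    have "f k \<le> (\<Sum>k<n. f k)" using that nn by (intro member_le_sum) auto
    with s1 show ?thesis by simp
  qed
  show ?thesis using assms nn le1 trunc_sum[of "\<lambda>x. x" n f] trunc_sum[of "\<lambda>x. x^2" n f]
    by (auto simp: KS_def trunc_def feasible_def)
qed

lemma cont_renyi:
  assumes "0 < \<alpha>"
  shows "continuous_on (KS n P) (renyi \<alpha> n)"
proof -
  have proj: "continuous_on (KS n P) (\<lambda>f. f k)" for k
    by (rule continuous_on_subset[OF continuous_on_product_coordinates]) simp
  have img: "(\<lambda>f. f k) ` KS n P \<subseteq> {0..}" for k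
  proof
    fix w assume "w \<in> (\<lambda>f. f k) ` KS n P"
    then obtain f where f: "f \<in> KS n P" "w = f k" by blast
    then have "f k \<in> (if k < n then {0..1} else {0})" by (simp add: KS_def)
    then show "w \<in> {0..}" using f(2) by (cases "k < n") auto
  qed
  have c1: "continuous_on (KS n P) (\<lambda>f. f k * ln (f k))" for k
    using continuous_on_compose2[OF cont_xlnx proj img] .
  have c2: "continuous_on (KS n P) (\<lambda>f. f k powr \<alpha>)" for k
    using continuous_on_compose2[OF cont_powr[OF assms] proj img] .
  show ?thesis
  proof (cases "\<alpha> = 1")
    case True
    have "continuous_on (KS n P) (\<lambda>f. - (\<Sum>k<n. f k * ln (f k)))"
      by (intro continuous_on_minus continuous_on_sum c1)
    then show ?thesis using True unfolding renyi_def by simp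
  next
    case False
    have sp: "(\<Sum>k<n. f k powr \<alpha>) \<noteq> 0" if "f \<in> KS n P" for f
    proof -
      have "0 < (\<Sum>k<n. f k powr \<alpha>)" using that by (rule Spos[OF KS_feasible])
      then show ?thesis by simp
    qed
    have "continuous_on (KS n P) (\<lambda>f. ln (\<Sum>k<n. f k powr \<alpha>) / (1 - \<alpha>))"
      using sp
      by (intro continuous_on_divide continuous_on_ln continuous_on_sum c2 continuous_on_const) (auto simp: False)
    then show ?thesis using False unfolding renyi_def by simp
  qed
qed

lemma exists_min:
  assumes "0 < \<alpha>" "feasible n P f0"
  shows "\<exists>lam. feasible n P lam \<and> (\<forall>mu. feasible n P mu \<longrightarrow> renyi \<alpha> n lam \<le> renyi \<alpha> n mu)"
proof -
  have ne: "KS n P \<noteq> {}" using trunc_KS[OF assms(2)] by blast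
  obtain lam where lam: "lam \<in> KS n P" "\<forall>y\<in>KS n P. renyi \<alpha> n lam \<le> renyi \<alpha> n y"
    using continuous_attains_inf[OF compact_KS ne cont_renyi[OF assms(1)]] by blast
  show ?thesis
  proof (intro exI[of _ lam] conjI allI impI)
    show "feasible n P lam" using lam(1) by (rule KS_feasible)
    fix mu assume "feasible n P mu"
    then have "renyi \<alpha> n lam \<le> renyi \<alpha> n (trunc n mu)" using lam(2) trunc_KS by blast
    then show "renyi \<alpha> n lam \<le> renyi \<alpha> n mu" by (simp add: trunc_renyi)
  qed
qed

lemma exists_max:
  assumes "0 < \<alpha>" "feasible n P f0"
  shows "\<exists>lam. feasible n P lam \<and> (\<forall>mu. feasible n P mu \<longrightarrow> renyi \<alpha> n mu \<le> renyi \<alpha> n lam)"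
proof -
  have ne: "KS n P \<noteq> {}" using trunc_KS[OF assms(2)] by blast
  obtain lam where lam: "lam \<in> KS n P" "\<forall>y\<in>KS n P. renyi \<alpha> n y \<le> renyi \<alpha> n lam"
    using continuous_attains_sup[OF compact_KS ne cont_renyi[OF assms(1)]] by blast
  show ?thesis
  proof (intro exI[of _ lam] conjI allI impI)
    show "feasible n P lam" using lam(1) by (rule KS_feasible)
    fix mu assume "feasible n P mu"
    then have "renyi \<alpha> n (trunc n mu) \<le> renyi \<alpha> n lam" using lam(2) trunc_KS by blast
    then show "renyi \<alpha> n mu \<le> renyi \<alpha> n lam" by (simp add: trunc_renyi)
  qed
qed



lemma three_elems:
  assumes "finite V" "2 < card V"
  shows "\<exists>a b c. a \<in> V \<and> b \<in> V \<and> c \<in> V \<and> a \<noteq> b \<and> a \<noteq> c \<and> b \<noteq> c"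
proof -
  obtain a where a: "a \<in> V" using assms by (metis card.empty ex_in_conv not_less_zero)
  have "card (V - {a}) = card V - 1" using a assms by simp
  then have c1: "1 < card (V - {a})" using assms by simp
  then obtain b where b: "b \<in> V - {a}" by (metis card.empty ex_in_conv not_less_zero)
  have "card (V - {a} - {b}) = card (V - {a}) - 1" using b assms by simp
  then have "0 < card (V - {a} - {b})" using c1 by simp
  then obtain c where c: "c \<in> V - {a} - {b}" by (metis card.empty ex_in_conv less_irrefl)
  show ?thesis using a b c by blast
qed

lemma improve:
  assumes feas: "feasible n P lam" and ntv: "\<not> two_valued n lam" and apos: "0 < \<alpha>" and a2: "\<alpha> \<noteq> 2"
  shows "\<exists>mu. feasible n P mu \<and> renyi \<alpha> n mu < renyi \<alpha> n lam"
    and "\<exists>mu. feasible n P mu \<and> renyi \<alpha> n lam < renyi \<alpha> n mu"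
proof -
  define V where "V = lam ` {..<n} - {0}"
  have "2 < card V" using ntv by (simp add: two_valued_def V_def)
  then obtain x y z where xyz: "x \<in> V" "y \<in> V" "z \<in> V" "x \<noteq> y" "x \<noteq> z" "y \<noteq> z"
    using three_elems[of V] by (auto simp: V_def)
  have nn: "\<forall>k<n. 0 \<le> lam k" using feas by (simp add: feasible_def)
  obtain i where i: "i < n" "lam i = x" using xyz(1) by (auto simp: V_def)
  obtain j where j: "j < n" "lam j = y" using xyz(2) by (auto simp: V_def)
  obtain k where k: "k < n" "lam k = z" using xyz(3) by (auto simp: V_def)
  have pos: "0 < x" "0 < y" "0 < z" using xyz(1-3) nn by (force simp: V_def)+
  have idx: "i \<noteq> j" "i \<noteq> k" "j \<noteq> k" using i j k xyz by auto
  have gen: "\<exists>mu1 mu2. feasible n P mu1 \<and> feasible n P mu2 \<and>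
      (\<Sum>l<n. g (mu1 l)) < (\<Sum>l<n. g (lam l)) \<and> (\<Sum>l<n. g (lam l)) < (\<Sum>l<n. g (mu2 l))"
    if dg: "\<And>t. 0 < t \<Longrightarrow> (g has_real_derivative g' t) (at t)"
      and df: "\<And>t. 0 < t \<Longrightarrow> (g' has_real_derivative f' t) (at t)"
      and inj: "\<And>u v. 0 < u \<Longrightarrow> 0 < v \<Longrightarrow> f' u = f' v \<Longrightarrow> u = v"
    for g g' f' :: "real \<Rightarrow> real"
  proof -
    have nc: "ncol g' (lam i) (lam j) (lam k) \<noteq> 0"
      using ncol_nz[of x y z g' f'] pos xyz df inj i j k by simp
    obtain mu1 where "feasible n P mu1 \<and> (\<Sum>l<n. g (mu1 l)) < (\<Sum>l<n. g (lam l))"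
      using perturb(1)[OF feas i(1) j(1) k(1) idx, of g g'] pos i j k xyz dg nc by auto
    moreover obtain mu2 where "feasible n P mu2 \<and> (\<Sum>l<n. g (lam l)) < (\<Sum>l<n. g (mu2 l))"
      using perturb(2)[OF feas i(1) j(1) k(1) idx, of g g'] pos i j k xyz dg nc by auto
    ultimately show ?thesis by blast
  qed
  have both: "(\<exists>mu. feasible n P mu \<and> renyi \<alpha> n mu < renyi \<alpha> n lam) \<and>
              (\<exists>mu. feasible n P mu \<and> renyi \<alpha> n lam < renyi \<alpha> n mu)"
  proof (cases "\<alpha> = 1")
    case True
    have dg: "((\<lambda>t. t * ln t) has_real_derivative ln t + 1) (at t)" if "0 < t" for t :: real
      using that by (auto intro!: derivative_eq_intros)
    have df: "((\<lambda>t. ln t + 1) has_real_derivative inverse t) (at t)" if "0 < t" for t :: real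
      using that by (auto intro!: derivative_eq_intros simp: divide_inverse)
    obtain mu1 mu2 where m: "feasible n P mu1" "feasible n P mu2"
      "(\<Sum>l<n. mu1 l * ln (mu1 l)) < (\<Sum>l<n. lam l * ln (lam l))"
      "(\<Sum>l<n. lam l * ln (lam l)) < (\<Sum>l<n. mu2 l * ln (mu2 l))"
      using gen[of "\<lambda>t. t * ln t" "\<lambda>t. ln t + 1" inverse] dg df by auto
    show ?thesis using m True by (auto simp: renyi_def)
  next
    case False
    have dg: "((\<lambda>t. t powr \<alpha>) has_real_derivative \<alpha> * t powr (\<alpha> - 1)) (at t)" if "0 < t" for t :: real
      using that by (rule has_real_derivative_powr)
    have df: "((\<lambda>t. \<alpha> * t powr (\<alpha> - 1)) has_real_derivative \<alpha> * ((\<alpha> - 1) * t powr (\<alpha> - 1 - 1))) (at t)"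
      if "0 < t" for t :: real
      using that by (intro DERIV_cmult has_real_derivative_powr)
    have inj: "u = v" if "0 < u" "0 < v" "\<alpha> * ((\<alpha> - 1) * u powr (\<alpha> - 1 - 1)) = \<alpha> * ((\<alpha> - 1) * v powr (\<alpha> - 1 - 1))"
      for u v :: real
    proof -
      have "u powr (\<alpha> - 1 - 1) = v powr (\<alpha> - 1 - 1)" using that(3) apos False by simp
      then have "ln (u powr (\<alpha> - 1 - 1)) = ln (v powr (\<alpha> - 1 - 1))" by simp
      then have "(\<alpha> - 1 - 1) * ln u = (\<alpha> - 1 - 1) * ln v" by (simp add: ln_powr)
      then have "ln u = ln v" using a2 by simp
      then show "u = v" using that(1,2) by simp
    qed
    obtain mu1 mu2 where m: "feasible n P mu1" "feasible n P mu2"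
      "(\<Sum>l<n. mu1 l powr \<alpha>) < (\<Sum>l<n. lam l powr \<alpha>)"
      "(\<Sum>l<n. lam l powr \<alpha>) < (\<Sum>l<n. mu2 l powr \<alpha>)"
      using gen[of "\<lambda>t. t powr \<alpha>" "\<lambda>t. \<alpha> * t powr (\<alpha> - 1)" "\<lambda>t. \<alpha> * ((\<alpha> - 1) * t powr (\<alpha> - 1 - 1))"] dg df inj
      by blast
    have l1: "ln (\<Sum>l<n. mu1 l powr \<alpha>) < ln (\<Sum>l<n. lam l powr \<alpha>)"
      using m(3) Spos[OF m(1)] Spos[OF feas] by simp
    have l2: "ln (\<Sum>l<n. lam l powr \<alpha>) < ln (\<Sum>l<n. mu2 l powr \<alpha>)"
      using m(4) Spos[OF m(2)] Spos[OF feas] by simp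
    have r: "\<And>f. renyi \<alpha> n f = ln (\<Sum>l<n. f l powr \<alpha>) / (1 - \<alpha>)" using False by (simp add: renyi_def)
    show ?thesis
    proof (cases "\<alpha> < 1")
      case True
      then have d: "0 < 1 - \<alpha>" by simp
      have "renyi \<alpha> n mu1 < renyi \<alpha> n lam" unfolding r using divide_strict_right_mono[OF l1 d] .
      moreover have "renyi \<alpha> n lam < renyi \<alpha> n mu2" unfolding r using divide_strict_right_mono[OF l2 d] .
      ultimately show ?thesis using m(1,2) by blast
    next
      case a1: False
      then have d: "1 - \<alpha> < 0" using False by simp
      have "renyi \<alpha> n lam < renyi \<alpha> n mu1" unfolding r using divide_strict_right_mono_neg[OF l1 d] .
      moreover have "renyi \<alpha> n mu2 < renyi \<alpha> n lam" unfolding r using divide_strict_right_mono_neg[OF l2 d] .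
      ultimately show ?thesis using m(1,2) by blast
    qed
  qed
  then show "\<exists>mu. feasible n P mu \<and> renyi \<alpha> n mu < renyi \<alpha> n lam"
    and "\<exists>mu. feasible n P mu \<and> renyi \<alpha> n lam < renyi \<alpha> n mu" by blast+
qed



lemma renyi2:
  assumes "feasible n P mu" shows "renyi 2 n mu = - ln P"
proof -
  have "(\<Sum>k<n. mu k powr 2) = (\<Sum>k<n. (mu k)^2)"
    using assms by (intro sum.cong) (auto simp: feasible_def powr_numeral)
  then show ?thesis using assms by (simp add: renyi_def feasible_def)
qed

lemma cand_exists:
  assumes "2 \<le> n" "1 / real n \<le> P" "P \<le> 1"
  shows "(1, n - 1, 1) \<in> cands n P"
proof -
  have nr: "real (1 + (n - 1)) = real n" using assms by simp
  have np: "0 < real n" using assms by simp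
  have Pn: "1 \<le> P * real n" using assms np by (simp add: field_simps)
  have "real 1 / real (n - 1) * (P * real (1 + (n - 1)) - 1) \<le> 1"
  proof -
    have "P * real n - 1 \<le> real n - 1" using assms np by (simp add: mult_left_le_one_le)
    moreover have "real (n - 1) = real n - 1" using assms by simp
    moreover have "0 < real n - 1" using assms by simp
    ultimately show ?thesis unfolding nr by (simp add: divide_le_eq)
  qed
  then have "sqrt (real 1 / real (n - 1) * (P * real (1 + (n - 1)) - 1)) \<le> 1" by simp
  then have "0 \<le> bval P 1 (n - 1) 1" by (simp add: bval_def)
  moreover have "0 \<le> aval P 1 (n - 1) 1"
  proof -
    have "0 \<le> real (n - 1) / real 1 * (P * real (1 + (n - 1)) - 1)" unfolding nr using Pn by simp
    then have "0 \<le> sqrt (real (n - 1) / real 1 * (P * real (1 + (n - 1)) - 1))" by simp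
    then show ?thesis unfolding aval_def by (intro divide_nonneg_nonneg) auto
  qed
  ultimately show ?thesis using assms Pn nr by (simp add: cands_def)
qed

lemma cands_finite: "finite (cands n P)"
proof -
  have "cands n P \<subseteq> {..n} \<times> {..n} \<times> {1, -1}" by (auto simp: cands_def)
  then show ?thesis by (rule finite_subset) auto
qed

theorem lemma2:
  fixes n :: nat and P \<alpha> :: real
  assumes "2 \<le> n" and "1 / real n \<le> P" and "P \<le> 1" and "0 < \<alpha>"
  shows "(\<forall>na nb. 0 < na \<longrightarrow> 0 < nb \<longrightarrow> 1 \<le> P * real (na + nb) \<longrightarrow>
            (\<forall>a b. real na * a + real nb * b = 1 \<and> real na * a\<^sup>2 + real nb * b\<^sup>2 = P \<longleftrightarrow>
               (\<exists>s\<in>{1, -1::real}. a = aval P na nb s \<and> b = bval P na nb s)))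
    \<and> (\<exists>lam. feasible n P lam \<and> two_valued n lam
           \<and> (\<forall>mu. feasible n P mu \<longrightarrow> renyi \<alpha> n lam \<le> renyi \<alpha> n mu)
           \<and> renyi \<alpha> n lam = Min (hval \<alpha> P ` cands n P))
    \<and> (\<exists>lam. feasible n P lam \<and> two_valued n lam
           \<and> (\<forall>mu. feasible n P mu \<longrightarrow> renyi \<alpha> n mu \<le> renyi \<alpha> n lam)
           \<and> renyi \<alpha> n lam = Max (hval \<alpha> P ` cands n P))"
proof (intro conjI)
  show "\<forall>na nb. 0 < na \<longrightarrow> 0 < nb \<longrightarrow> 1 \<le> P * real (na + nb) \<longrightarrow>
            (\<forall>a b. real na * a + real nb * b = 1 \<and> real na * a\<^sup>2 + real nb * b\<^sup>2 = P \<longleftrightarrow>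
               (\<exists>s\<in>{1, -1::real}. a = aval P na nb s \<and> b = bval P na nb s))"
    using part1 by blast
  define H where "H = hval \<alpha> P ` cands n P"
  have cne: "cands n P \<noteq> {}" using cand_exists[OF assms(1-3)] by blast
  have Hfin: "finite H" "H \<noteq> {}" using cands_finite cne by (auto simp: H_def)
  have vec_of: "feasible n P (vec2 na nb (aval P na nb s) (bval P na nb s)) \<and>
      two_valued n (vec2 na nb (aval P na nb s) (bval P na nb s)) \<and>
      renyi \<alpha> n (vec2 na nb (aval P na nb s) (bval P na nb s)) = hval \<alpha> P (na, nb, s)"
    if "(na, nb, s) \<in> cands n P" for na nb s
    using cand_vec[OF that] two_valued_vec2 by blast
  obtain f0 where f0: "feasible n P f0" using vec_of cne by (metis ex_in_conv prod_cases3)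
  show "\<exists>lam. feasible n P lam \<and> two_valued n lam
           \<and> (\<forall>mu. feasible n P mu \<longrightarrow> renyi \<alpha> n lam \<le> renyi \<alpha> n mu)
           \<and> renyi \<alpha> n lam = Min (hval \<alpha> P ` cands n P)"
  proof -
    have "Min H \<in> H" using Hfin by (rule Min_in)
    then obtain na nb s where c0: "(na, nb, s) \<in> cands n P" "hval \<alpha> P (na, nb, s) = Min H"
      unfolding H_def by auto
    define lam where "lam = vec2 na nb (aval P na nb s) (bval P na nb s)"
    have L: "feasible n P lam" "two_valued n lam" "renyi \<alpha> n lam = Min H"
      using vec_of[OF c0(1)] c0(2) by (auto simp: lam_def)
    have ext: "renyi \<alpha> n lam \<le> renyi \<alpha> n mu" if mu: "feasible n P mu" for mu
    proof (cases "\<alpha> = 2")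
      case True then show ?thesis using renyi2 mu L(1) by simp
    next
      case False
      obtain ls where ls: "feasible n P ls" "\<forall>mu. feasible n P mu \<longrightarrow> renyi \<alpha> n ls \<le> renyi \<alpha> n mu"
        using exists_min[OF assms(4) f0] by blast
      have "two_valued n ls"
      proof (rule ccontr)
        assume "\<not> two_valued n ls"
        then obtain m where "feasible n P m" "renyi \<alpha> n m < renyi \<alpha> n ls"
          using improve(1)[OF ls(1) _ assms(4) False] by blast
        then show False using ls(2) by fastforce
      qed
      then obtain c where c: "c \<in> cands n P" "renyi \<alpha> n ls = hval \<alpha> P c"
        using tv_cand[OF ls(1) _ assms(1)] by blast
      have "Min H \<le> hval \<alpha> P c" using Hfin c(1) by (intro Min_le) (auto simp: H_def)
      then show ?thesis using L(3) c(2) ls(2) mu by fastforce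
    qed
    show ?thesis using L ext by (auto simp: H_def)
  qed
  show "\<exists>lam. feasible n P lam \<and> two_valued n lam
           \<and> (\<forall>mu. feasible n P mu \<longrightarrow> renyi \<alpha> n mu \<le> renyi \<alpha> n lam)
           \<and> renyi \<alpha> n lam = Max (hval \<alpha> P ` cands n P)"
  proof -
    have "Max H \<in> H" using Hfin by (rule Max_in)
    then obtain na nb s where c0: "(na, nb, s) \<in> cands n P" "hval \<alpha> P (na, nb, s) = Max H"
      unfolding H_def by auto
    define lam where "lam = vec2 na nb (aval P na nb s) (bval P na nb s)"
    have L: "feasible n P lam" "two_valued n lam" "renyi \<alpha> n lam = Max H"
      using vec_of[OF c0(1)] c0(2) by (auto simp: lam_def)
    have ext: "renyi \<alpha> n mu \<le> renyi \<alpha> n lam" if mu: "feasible n P mu" for mu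
    proof (cases "\<alpha> = 2")
      case True then show ?thesis using renyi2 mu L(1) by simp
    next
      case False
      obtain ls where ls: "feasible n P ls" "\<forall>mu. feasible n P mu \<longrightarrow> renyi \<alpha> n mu \<le> renyi \<alpha> n ls"
        using exists_max[OF assms(4) f0] by blast
      have "two_valued n ls"
      proof (rule ccontr)
        assume "\<not> two_valued n ls"
        then obtain m where "feasible n P m" "renyi \<alpha> n ls < renyi \<alpha> n m"
          using improve(2)[OF ls(1) _ assms(4) False] by blast
        then show False using ls(2) by fastforce
      qed
      then obtain c where c: "c \<in> cands n P" "renyi \<alpha> n ls = hval \<alpha> P c"
        using tv_cand[OF ls(1) _ assms(1)] by blast
      have "hval \<alpha> P c \<le> Max H" using Hfin c(1) by (intro Max_ge) (auto simp: H_def)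
      then show ?thesis using L(3) c(2) ls(2) mu by fastforce
    qed
    show ?thesis using L ext by (auto simp: H_def)
  qed
qed


end
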